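(* Let $b\geq 3$ and $h=\left\lceil\frac{(b-1)^2+1}{2}\right\rceil$. Then the zero entries of the Boolean matrix $(W_b)^{h-1}(W_b^t)^{h-1}$ occur only in the $(b,\lfloor \frac{b}{2}\rfloor)$ and $(\lfloor \frac{b}{2}\rfloor, b)$ positions.
   Context: Matrix products are Boolean ($1+1=1$). For $b\geq 3$, $W_b$ is the $b\times b$ $(0,1)$-matrix whose entries equal to $1$ are exactly those in positions $(i,i+1)$ for $1\leq i\leq b-1$, together with positions $(b-1,1)$ and $(b,1)$; all other entries are $0$. (Its digraph is the Wielandt graph: the cycle $1\to 2\to\cdots\to b\to 1$ plus the arc $b-1\to 1$.) $W_b^t$ denotes the transpose. *)

theory Defs
  imports Complex_Main
begin

text \<open>Boolean b x b matrices, indices in {1..b}, represented as nat \<Rightarrow> nat \<Rightarrow> bool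
  (True = entry 1, False = entry 0). Values outside {1..b} are irrelevant.\<close>

definition W :: "nat \<Rightarrow> nat \<Rightarrow> nat \<Rightarrow> bool" where
  "W b i j \<longleftrightarrow> (1 \<le> i \<and> i \<le> b - 1 \<and> j = i + 1) \<or> (i = b - 1 \<and> j = 1) \<or> (i = b \<and> j = 1)"

definition btransp :: "(nat \<Rightarrow> nat \<Rightarrow> bool) \<Rightarrow> nat \<Rightarrow> nat \<Rightarrow> bool" where
  "btransp A i j \<longleftrightarrow> A j i"

definition bmult :: "nat \<Rightarrow> (nat \<Rightarrow> nat \<Rightarrow> bool) \<Rightarrow> (nat \<Rightarrow> nat \<Rightarrow> bool) \<Rightarrow> nat \<Rightarrow> nat \<Rightarrow> bool" where
  "bmult b A B i j \<longleftrightarrow> (\<exists>k\<in>{1..b}. A i k \<and> B k j)"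

fun bpow :: "nat \<Rightarrow> (nat \<Rightarrow> nat \<Rightarrow> bool) \<Rightarrow> nat \<Rightarrow> nat \<Rightarrow> nat \<Rightarrow> bool" where
  "bpow b A 0 = (\<lambda>i j. i = j)"
| "bpow b A (Suc n) = bmult b (bpow b A n) A"

end

theory Submission
  imports Defs
begin

definition inS :: "nat \<Rightarrow> nat \<Rightarrow> bool" where
  "inS b n \<longleftrightarrow> (\<exists>x y. n = x*(b-1) + y*b)"

definition pp :: "nat \<Rightarrow> nat \<Rightarrow> nat" where
  "pp b i = (if i = b then 0 else i)"

definition Pw :: "nat \<Rightarrow> nat \<Rightarrow> nat \<Rightarrow> nat \<Rightarrow> bool" where
  "Pw b L i k \<longleftrightarrow> k \<le> L + pp b i \<and> inS b (L + pp b i - k)"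

lemma inS_I:
  assumes "b \<ge> 1" "r \<le> t" "n = t*(b-1) + r"
  shows "inS b n"
proof -
  obtain e where e: "t = r + e" using assms(2) le_Suc_ex by blast
  have "r * b = r*(b-1) + r" using assms(1)
    by (cases b) (auto simp: algebra_simps)
  moreover have "n = r*(b-1) + e*(b-1) + r" using assms(3) e by (simp add: add_mult_distrib)
  ultimately have "n = e*(b-1) + r*b" by linarith
  thus ?thesis unfolding inS_def by blast
qed

lemma inS_small:
  assumes "b \<ge> 2" "inS b n" "n < b"
  shows "n = 0 \<or> n = b - 1"
proof -
  obtain x y where n: "n = x*(b-1) + y*b" using assms(2) unfolding inS_def by blast
  have y: "y = 0"
  proof (rule ccontr)
    assume "y \<noteq> 0" hence "y*b \<ge> b" by simp
    thus False using n assms(3) by linarith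
  qed
  consider "x = 0" | "x = 1" | "x \<ge> 2" by linarith
  thus ?thesis
  proof cases
    case 3
    hence "x*(b-1) \<ge> 2*(b-1)" by simp
    thus ?thesis using n y assms by linarith
  qed (use n y in auto)
qed

lemma inS_dec:
  assumes "b \<ge> 1" "inS b n" "n > 0"
  shows "(b - 1 \<le> n \<and> inS b (n - (b-1))) \<or> (b \<le> n \<and> inS b (n - b))"
proof -
  obtain x y where n: "n = x*(b-1) + y*b" using assms(2) unfolding inS_def by blast
  show ?thesis
  proof (cases "x > 0")
    case True
    then obtain x' where "x = Suc x'" using gr0_implies_Suc by blast
    hence "n = (b-1) + (x'*(b-1) + y*b)" using n by simp
    thus ?thesis unfolding inS_def by auto
  next
    case False
    hence "y > 0" using n assms(3) by (cases y) auto
    then obtain y' where "y = Suc y'" using gr0_implies_Suc by blast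
    hence "n = b + (x*(b-1) + y'*b)" using n by simp
    thus ?thesis unfolding inS_def by auto
  qed
qed

lemma bpow_S: "bpow b A (Suc n) i k = (\<exists>k'\<in>{1..b}. bpow b A n i k' \<and> A k' k)"
  by (simp add: bmult_def)

declare bpow.simps(2)[simp del]

lemma W_succ: "1 \<le> i \<Longrightarrow> i \<le> b - 1 \<Longrightarrow> W b i (i+1)"
  by (simp add: W_def)
lemma W_b1: "W b (b-1) 1" by (simp add: W_def)
lemma W_bb: "W b b 1" by (simp add: W_def)

lemma base:
  assumes b3: "b \<ge> 3" and i: "i \<in> {1..b}" and k: "k \<in> {1..b}" and P: "Pw b 1 i k"
  shows "W b i k"
proof -
  have k1: "1 \<le> k" "k \<le> b" using k by auto
  have i1: "1 \<le> i" "i \<le> b" using i by auto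
  have le: "k \<le> 1 + pp b i" and s: "inS b (1 + pp b i - k)" using P unfolding Pw_def by auto
  have ppb: "pp b i \<le> b - 1" using i1 unfolding pp_def by auto
  hence "1 + pp b i - k < b" using k1 b3 by linarith
  hence "1 + pp b i - k = 0 \<or> 1 + pp b i - k = b - 1" using inS_small[OF _ s] b3 by linarith
  thus ?thesis
  proof
    assume "1 + pp b i - k = 0"
    hence kk: "k = 1 + pp b i" using le by linarith
    show ?thesis
    proof (cases "i = b")
      case True
      hence "k = 1" using kk unfolding pp_def by simp
      thus ?thesis using True W_bb by simp
    next
      case False
      hence "k = i + 1" "i \<le> b - 1" using kk i1 unfolding pp_def by auto
      thus ?thesis using W_succ[of i b] i1 by simp
    qed
  next
    assume h: "1 + pp b i - k = b - 1"
    hence "pp b i \<ge> b - 1" using k1 by linarith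
    hence "i = b - 1" using i1 b3 unfolding pp_def by (auto split: if_splits)
    moreover have "k = 1" using h ppb k1 by linarith
    ultimately show ?thesis using W_b1 by simp
  qed
qed

lemma walkW:
  assumes "b \<ge> 3"
  shows "\<forall>i\<in>{1..b}. \<forall>k\<in>{1..b}. Pw b (Suc L) i k \<longrightarrow> bpow b (W b) (Suc L) i k"
proof (induction L)
  case 0
  show ?case using base[OF assms] unfolding bpow_S[of b _ 0] by auto
next
  case (Suc L)
  show ?case
  proof (intro ballI impI)
    fix i k assume i: "i \<in> {1..b}" and k: "k \<in> {1..b}" and P: "Pw b (Suc (Suc L)) i k"
    show "bpow b (W b) (Suc (Suc L)) i k"
    proof (cases "k \<ge> 2")
      case True
      have km: "k - 1 \<in> {1..b}" using True k by auto
      have e: "Suc L + pp b i - (k-1) = Suc (Suc L) + pp b i - k" using True by simp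
      have "Pw b (Suc L) i (k-1)" using P True unfolding Pw_def e by auto
      hence "bpow b (W b) (Suc L) i (k-1)" using Suc.IH i km by blast
      moreover have "W b (k-1) k" using W_succ[of "k-1" b] True k by simp
      moreover note km
      ultimately show ?thesis unfolding bpow_S[of b _ "Suc L"] by blast
    next
      case False
      hence k1: "k = 1" using k by auto
      have s: "inS b (Suc L + pp b i)" using P k1 unfolding Pw_def by simp
      from inS_dec[OF _ s] assms
      have "(b - 1 \<le> Suc L + pp b i \<and> inS b (Suc L + pp b i - (b-1))) \<or> (b \<le> Suc L + pp b i \<and> inS b (Suc L + pp b i - b))" by auto
      thus ?thesis
      proof
        assume h: "b - 1 \<le> Suc L + pp b i \<and> inS b (Suc L + pp b i - (b-1))"
        hence "Pw b (Suc L) i (b-1)" unfolding Pw_def by auto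
        moreover have "b - 1 \<in> {1..b}" using assms by auto
        ultimately have "bpow b (W b) (Suc L) i (b-1)" using Suc.IH i by blast
        moreover have "W b (b-1) k" using k1 W_b1 by simp
        moreover have "b - 1 \<in> {1..b}" using assms by auto
        ultimately show ?thesis unfolding bpow_S[of b _ "Suc L"] by blast
      next
        assume h: "b \<le> Suc L + pp b i \<and> inS b (Suc L + pp b i - b)"
        hence "Pw b (Suc L) i b" unfolding Pw_def by auto
        moreover have "b \<in> {1..b}" using assms by auto
        ultimately have "bpow b (W b) (Suc L) i b" using Suc.IH i by blast
        moreover have "W b b k" using k1 W_bb by simp
        moreover have "b \<in> {1..b}" using assms by auto
        ultimately show ?thesis unfolding bpow_S[of b _ "Suc L"] by blast
      qed
    qed
  qed
qed

lemma walkWt: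
  assumes "b \<ge> 3"
  shows "\<forall>i\<in>{1..b}. \<forall>k\<in>{1..b}. Pw b (Suc L) i k \<longrightarrow> bpow b (btransp (W b)) (Suc L) k i"
proof (induction L)
  case 0
  show ?case using base[OF assms] unfolding bpow_S[of b _ 0] btransp_def by auto
next
  case (Suc L)
  show ?case
  proof (intro ballI impI)
    fix i k assume i: "i \<in> {1..b}" and k: "k \<in> {1..b}" and P: "Pw b (Suc (Suc L)) i k"
    have step: "bpow b (btransp (W b)) (Suc (Suc L)) k i"
      if "l \<in> {1..b}" "Pw b (Suc L) l k" "W b i l" for l
    proof -
      have "bpow b (btransp (W b)) (Suc L) k l" using Suc.IH that k by blast
      thus ?thesis using that unfolding bpow_S[of b _ "Suc L"] btransp_def by blast
    qed
    consider "i \<le> b - 2" | "i = b - 1" | "i = b" using i by force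
    thus "bpow b (btransp (W b)) (Suc (Suc L)) k i"
    proof cases
      case 1
      have "pp b (i+1) = pp b i + 1" using 1 i assms unfolding pp_def by auto
      hence "Pw b (Suc L) (i+1) k" using P unfolding Pw_def by auto
      moreover have "W b i (i+1)" using 1 i unfolding W_def by auto
      ultimately show ?thesis using step[of "i+1"] 1 assms by auto
    next
      case 3
      have "pp b 1 = 1" "pp b i = 0" using 3 assms unfolding pp_def by auto
      hence "Pw b (Suc L) 1 k" using P unfolding Pw_def by auto
      moreover have "W b i 1" using 3 unfolding W_def by auto
      ultimately show ?thesis using step[of 1] assms by auto
    next
      case 2
      have ppi: "pp b i = b - 1" using 2 assms unfolding pp_def by auto
      have p1: "pp b 1 = 1" "pp b b = 0" using assms unfolding pp_def by auto
      have s: "inS b (Suc (Suc L) + pp b i - k)" using P unfolding Pw_def by auto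
      have pos: "Suc (Suc L) + pp b i - k > 0" using ppi k assms by auto
      from inS_dec[OF _ s pos] assms
      consider "b - 1 \<le> Suc (Suc L) + pp b i - k" "inS b (Suc (Suc L) + pp b i - k - (b-1))"
        | "b \<le> Suc (Suc L) + pp b i - k" "inS b (Suc (Suc L) + pp b i - k - b)" by auto
      thus ?thesis
      proof cases
        case 1
        hence "Pw b (Suc L) 1 k" using p1 ppi k assms unfolding Pw_def
          by auto
        moreover have "W b i 1" using 2 unfolding W_def by auto
        ultimately show ?thesis using step[of 1] assms by auto
      next
        case 3: 2
        hence "Pw b (Suc L) b k" using p1 ppi k assms unfolding Pw_def by auto
        moreover have "W b i b" using 2 assms unfolding W_def by auto
        ultimately show ?thesis using step[of b] assms by auto
      qed
    qed
  qed
qed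


lemma inS_I2:
  assumes "m + p = k + (t*(b-1) + r)" "b \<ge> 1" "r \<le> t"
  shows "k \<le> m + p \<and> inS b (m + p - k)"
proof -
  have "m + p - k = t*(b-1) + r" using assms(1) by linarith
  thus ?thesis using inS_I[OF assms(2,3)] assms(1) by simp
qed

lemma arith_odd:
  assumes b: "b = 2*s+1" and s1: "s \<ge> 1" and p: "p1 \<le> p2" "p2 \<le> 2*s" and ex: "\<not>(p1 = 0 \<and> p2 = s)"
  shows "\<exists>k\<in>{1..b}. (k \<le> 2*s*s + p1 \<and> inS b (2*s*s + p1 - k)) \<and> (k \<le> 2*s*s + p2 \<and> inS b (2*s*s + p2 - k))"
proof -
  have b1: "b \<ge> 1" and c: "b - 1 = 2*s" using b by auto
  obtain u where u: "s = Suc u" using s1 by (cases s) auto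
  obtain d where d: "p2 = p1 + d" using p(1) le_Suc_ex by blast
  consider "p1 \<ge> 1" "d \<le> s" | "p1 = 0" "d < s" | "d \<ge> s + 1" using ex d by linarith
  thus ?thesis
  proof cases
    case 1
    have e1: "2*s*s + p1 = p1 + (s*(b-1) + 0)" unfolding c by (simp add: algebra_simps)
    have e2: "2*s*s + p2 = p1 + (s*(b-1) + d)" unfolding c d by (simp add: algebra_simps)
    have "p1 \<in> {1..b}" using 1 p b by auto
    thus ?thesis using inS_I2[OF e1 b1] inS_I2[OF e2 b1] 1 by blast
  next
    case 2
    have e1: "2*s*s + p1 = 2*s + (u*(b-1) + 0)" unfolding c using 2 u by (simp add: algebra_simps)
    have e2: "2*s*s + p2 = 2*s + (u*(b-1) + d)" unfolding c d using 2 u by (simp add: algebra_simps)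
    have "2*s \<in> {1..b}" using s1 b by auto
    moreover have "d \<le> u" using 2 u by linarith
    ultimately show ?thesis using inS_I2[OF e1 b1] inS_I2[OF e2 b1] by blast
  next
    case 3
    then obtain e where e: "d = s + 1 + e" using le_Suc_ex by blast
    have e1: "2*s*s + p1 = (s+1+p1) + (u*(b-1) + u)" unfolding c using u by (simp add: algebra_simps)
    have e2: "2*s*s + p2 = (s+1+p1) + (s*(b-1) + e)" unfolding c d e by (simp add: algebra_simps)
    have "e \<le> s" using p d e by linarith
    moreover have "s+1+p1 \<in> {1..b}" using p d e b by auto
    ultimately show ?thesis using inS_I2[OF e1 b1] inS_I2[OF e2 b1] by blast
  qed
qed

lemma arith_even:
  assumes b: "b = 2*s+2" and s1: "s \<ge> 1" and p: "p1 \<le> p2" "p2 \<le> 2*s+1" and ex: "\<not>(p1 = 0 \<and> p2 = s+1)"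
  shows "\<exists>k\<in>{1..b}. (k \<le> 2*s*s+2*s + p1 \<and> inS b (2*s*s+2*s + p1 - k)) \<and> (k \<le> 2*s*s+2*s + p2 \<and> inS b (2*s*s+2*s + p2 - k))"
proof -
  have b1: "b \<ge> 1" and c: "b - 1 = 2*s+1" using b by auto
  obtain u where u: "s = Suc u" using s1 by (cases s) auto
  obtain d where d: "p2 = p1 + d" using p(1) le_Suc_ex by blast
  consider "d \<le> s" "p1 \<ge> s+2" | "d \<le> s" "p1 \<le> s+1" | "d = s+1" "p1 \<ge> 1"
    | "d \<ge> s+2" "p1 = 0" | "d \<ge> s+2" "p1 \<ge> 1" using ex d by linarith
  thus ?thesis
  proof cases
    case 1
    then obtain q where q: "p1 = s+2+q" using le_Suc_ex by blast
    have e1: "2*s*s+2*s + p1 = b + (s*(b-1) + q)" unfolding c q b by (simp add: algebra_simps)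
    have e2: "2*s*s+2*s + p2 = b + (s*(b-1) + (q+d))" unfolding c d q b by (simp add: algebra_simps)
    have "q + d \<le> s" using p d q by linarith
    moreover have "b \<in> {1..b}" using b by auto
    ultimately show ?thesis using inS_I2[OF e1 b1] inS_I2[OF e2 b1] by force
  next
    case 2
    have e1: "2*s*s+2*s + p1 = (s+p1) + (s*(b-1) + 0)" unfolding c by (simp add: algebra_simps)
    have e2: "2*s*s+2*s + p2 = (s+p1) + (s*(b-1) + d)" unfolding c d by (simp add: algebra_simps)
    have "s+p1 \<in> {1..b}" using 2 b s1 by auto
    thus ?thesis using inS_I2[OF e1 b1] inS_I2[OF e2 b1] 2 by blast
  next
    case 3
    have e1: "2*s*s+2*s + p1 = p1 + (s*(b-1) + s)" unfolding c by (simp add: algebra_simps)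
    have e2: "2*s*s+2*s + p2 = p1 + ((s+1)*(b-1) + 0)" unfolding c d 3 by (simp add: algebra_simps)
    have "p1 \<in> {1..b}" using 3 b p d by auto
    thus ?thesis using inS_I2[OF e1 b1 order_refl] inS_I2[OF e2 b1 le0] by blast
  next
    case 4
    then obtain q where q: "p2 = s+2+q" using d le_Suc_ex[of "s+2" p2] by auto
    have e1: "2*s*s+2*s + p1 = b + (u*(b-1) + u)" unfolding c b using 4 u by (simp add: algebra_simps)
    have e2: "2*s*s+2*s + p2 = b + (s*(b-1) + q)" unfolding c b q by (simp add: algebra_simps)
    have "q \<le> s" using p q by linarith
    moreover have "b \<in> {1..b}" using b by auto
    ultimately show ?thesis using inS_I2[OF e1 b1] inS_I2[OF e2 b1] by force
  next
    case 5
    then obtain k where k: "p2 = s + 1 + k" using d le_Suc_ex[of "s+1" p2] by auto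
    have k1: "k \<ge> 1" using 5 d k by linarith
    obtain e where e: "2*s+1 = d + e" using p d le_Suc_ex by (metis add_leD2 le_add_diff_inverse)
    have se: "s*(2*s+1) = s*d + s*e" using e by (metis distrib_left)
    have sq: "s*(2*s+1) = 2*s*s + s" by (simp add: algebra_simps)
    have e1: "2*s*s+2*s + p1 = k + (s*(b-1) + e)" unfolding c using se sq e d k by linarith
    have e2: "2*s*s+2*s + p2 = k + ((s+1)*(b-1) + 0)" unfolding c k by (simp add: algebra_simps)
    have "e \<le> s" using e 5 by linarith
    moreover have "k \<in> {1..b}" using k k1 p b by auto
    ultimately show ?thesis using inS_I2[OF e1 b1] inS_I2[OF e2 b1] by force
  qed
qed

lemma h_odd:
  assumes "b = 2*s+1"
  shows "nat \<lceil>(real ((b - 1)^2) + 1) / 2\<rceil> = 2*s*s+1"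
proof -
  have r: "real ((b-1)^2) = 4 * (real s * real s)" using assms by (simp add: power2_eq_square)
  have "\<lceil>(real ((b - 1)^2) + 1) / 2\<rceil> = int (2*s*s+1)"
    unfolding r by (rule ceiling_unique) simp_all
  thus ?thesis by (metis nat_int)
qed

lemma h_even:
  assumes "b = 2*s+2"
  shows "nat \<lceil>(real ((b - 1)^2) + 1) / 2\<rceil> = 2*s*s+2*s+1"
proof -
  have r: "real ((b-1)^2) = 4 * (real s * real s) + 4 * real s + 1" using assms
    by (simp add: power2_eq_square algebra_simps)
  have "\<lceil>(real ((b - 1)^2) + 1) / 2\<rceil> = int (2*s*s+2*s+1)"
    unfolding r by (rule ceiling_unique) simp_all
  thus ?thesis by (metis nat_int)
qed

lemma common0:
  assumes b3: "b \<ge> 3"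
    and mcase: "(\<exists>s. b = 2*s+1 \<and> s \<ge> 1 \<and> m = 2*s*s) \<or> (\<exists>s. b = 2*s+2 \<and> s \<ge> 1 \<and> m = 2*s*s+2*s)"
    and i: "i \<in> {1..b}" and j: "j \<in> {1..b}" and le: "pp b i \<le> pp b j"
    and ex: "\<not>(pp b i = 0 \<and> pp b j = b div 2)"
  shows "\<exists>k\<in>{1..b}. Pw b m i k \<and> Pw b m j k"
proof -
  have pj: "pp b j \<le> b - 1" using j unfolding pp_def by auto
  from mcase show ?thesis
  proof
    assume "\<exists>s. b = 2*s+1 \<and> s \<ge> 1 \<and> m = 2*s*s"
    then obtain s where s: "b = 2*s+1" "s \<ge> 1" "m = 2*s*s" by blast
    have "b div 2 = s" using s by simp
    hence "\<exists>k\<in>{1..b}. (k \<le> 2*s*s + pp b i \<and> inS b (2*s*s + pp b i - k)) \<and> (k \<le> 2*s*s + pp b j \<and> inS b (2*s*s + pp b j - k))"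
      using arith_odd[OF s(1,2) le] pj ex s by auto
    thus ?thesis unfolding Pw_def s(3) by blast
  next
    assume "\<exists>s. b = 2*s+2 \<and> s \<ge> 1 \<and> m = 2*s*s+2*s"
    then obtain s where s: "b = 2*s+2" "s \<ge> 1" "m = 2*s*s+2*s" by blast
    have "b div 2 = s+1" using s by simp
    hence "\<exists>k\<in>{1..b}. (k \<le> 2*s*s+2*s + pp b i \<and> inS b (2*s*s+2*s + pp b i - k)) \<and> (k \<le> 2*s*s+2*s + pp b j \<and> inS b (2*s*s+2*s + pp b j - k))"
      using arith_even[OF s(1,2) le] pj ex s by auto
    thus ?thesis unfolding Pw_def s(3) by blast
  qed
qed

lemma pp_facts:
  assumes "b \<ge> 3" "i \<in> {1..b}"
  shows "pp b i = 0 \<longleftrightarrow> i = b" and "pp b i = b div 2 \<longrightarrow> i = b div 2"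
  using assms unfolding pp_def by auto

theorem lemma2p4:
  fixes b h :: nat
  assumes "b \<ge> 3"
    and "h = nat \<lceil>(real ((b - 1)^2) + 1) / 2\<rceil>"
  shows "\<forall>i\<in>{1..b}. \<forall>j\<in>{1..b}.
           \<not> bmult b (bpow b (W b) (h - 1)) (bpow b (btransp (W b)) (h - 1)) i j
           \<longrightarrow> (i = b \<and> j = b div 2) \<or> (i = b div 2 \<and> j = b)"
proof (intro ballI impI)
  fix i j assume i: "i \<in> {1..b}" and j: "j \<in> {1..b}"
    and nb: "\<not> bmult b (bpow b (W b) (h - 1)) (bpow b (btransp (W b)) (h - 1)) i j"
  define m where "m = h - 1"
  have mcase: "(\<exists>s. b = 2*s+1 \<and> s \<ge> 1 \<and> m = 2*s*s) \<or> (\<exists>s. b = 2*s+2 \<and> s \<ge> 1 \<and> m = 2*s*s+2*s)"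
  proof (cases "even b")
    case True
    define s where "s = b div 2 - 1"
    have bs: "b = 2*s+2" "s \<ge> 1" using True assms(1) unfolding s_def by auto
    have "m = 2*s*s+2*s" unfolding m_def assms(2) h_even[OF bs(1)] by simp
    thus ?thesis using bs by blast
  next
    case False
    define s where "s = b div 2"
    have bs: "b = 2*s+1" "s \<ge> 1" using False assms(1) unfolding s_def by auto
    have "m = 2*s*s" unfolding m_def assms(2) h_odd[OF bs(1)] by simp
    thus ?thesis using bs by blast
  qed
  have m1: "m \<ge> 1" using mcase by auto
  then obtain L where L: "m = Suc L" by (cases m) auto
  show "(i = b \<and> j = b div 2) \<or> (i = b div 2 \<and> j = b)"
  proof (rule ccontr)
    assume nex: "\<not> ((i = b \<and> j = b div 2) \<or> (i = b div 2 \<and> j = b))"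
    have "\<exists>k\<in>{1..b}. Pw b m i k \<and> Pw b m j k"
    proof (cases "pp b i \<le> pp b j")
      case True
      have "\<not>(pp b i = 0 \<and> pp b j = b div 2)" using nex pp_facts[OF assms(1) i] pp_facts[OF assms(1) j] by blast
      thus ?thesis using common0[OF assms(1) mcase i j True] by blast
    next
      case False
      have "\<not>(pp b j = 0 \<and> pp b i = b div 2)" using nex pp_facts[OF assms(1) i] pp_facts[OF assms(1) j] by blast
      thus ?thesis using common0[OF assms(1) mcase j i] False by auto
    qed
    then obtain k where k: "k \<in> {1..b}" "Pw b m i k" "Pw b m j k" by blast
    have "bpow b (W b) m i k" using walkW[OF assms(1), of L] i k L by blast
    moreover have "bpow b (btransp (W b)) m k j" using walkWt[OF assms(1), of L] j k L by blast
    ultimately have "bmult b (bpow b (W b) m) (bpow b (btransp (W b)) m) i j"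
      using k(1) unfolding bmult_def by blast
    thus False using nb unfolding m_def by simp
  qed
qed

end
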